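(* Let $p,n$ be positive integers with $\gcd(p,n)=1$, and $y\in\mathbb{Z}_n$. Then the full pointed quandle coloring quiver $\mathcal{Q}_{(\mathbb{Z}_n,y,y)}(\widetilde{\mathcal{T}(p,2)})$ is isomorphic to $K_{1,n}$, i.e. it has a single vertex (the trivial coloring) carrying $n$ loops.
   Context: $\mathbb{Z}_n$ is the dihedral quandle ($x\triangleright y=2y-x$ mod $n$) and $(\mathbb{Z}_n,y,y)$ the $2$-pointed quandle with both basepoints $y$. $P(\widetilde{\mathcal{T}(p,2)})=(Q,x_1,x_{p+1})$ with $Q=\langle x_1,\dots,x_{p+1}\mid x_p=x_2\triangleright x_{p+1},\ x_i=x_{i+2}\triangleright x_{i+1}\ (1\le i\le p-1)\rangle$, the fundamental pointed quandle of the $1$-linkoid of $(p,2)$-torus type. For a pointed quandle $\mathcal{X}$, the full pointed quandle coloring quiver $\mathcal{Q}_{\mathcal{X}}(L)$ is the directed multigraph with vertex set $\hom(P(L),\mathcal{X})$ (basepoint-preserving homomorphisms) and, for vertices $\alpha,\beta$, $|\{\varphi\in\operatorname{End}(\mathcal{X}):\varphi\circ\alpha=\beta\}|$ arcs from $\alpha$ to $\beta$, where $\operatorname{End}(\mathcal{X})$ is the set of pointed endomorphisms. $K_{m,k}$ denotes the directed multigraph on vertex set $\{1,\dots,m\}$ with exactly $k$ arcs from $u$ to $v$ for every ordered pair $(u,v)$ (including $u=v$). *)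

theory Defs
  imports "HOL-Library.FuncSet"
begin

definition dih_op :: "nat \<Rightarrow> int \<Rightarrow> int \<Rightarrow> int" where
  "dih_op n a b = (2 * b - a) mod int n"

definition dih_carrier :: "nat \<Rightarrow> int set" where
  "dih_carrier n = {0..<int n}"

text \<open>Basepoint-preserving homomorphisms from the fundamental pointed quandle
  P(T(p,2)~) = (Q, x_1, x_{p+1}) to (Z_n, y, y).  By the universal property of the
  presentation, such a homomorphism is the same as an assignment of the generators
  x_1..x_{p+1} (a function on indices {1..p+1}) satisfying the defining relations,
  with x_1 sent to y and x_{p+1} sent to y.\<close>
definition torus_colorings :: "nat \<Rightarrow> nat \<Rightarrow> int \<Rightarrow> (nat \<Rightarrow> int) set" where
  "torus_colorings p n y =
     {c \<in> extensional {1..p+1}.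
        (\<forall>i\<in>{1..p+1}. c i \<in> dih_carrier n) \<and>
        c p = dih_op n (c 2) (c (p+1)) \<and>
        (\<forall>i. 1 \<le> i \<and> i \<le> p - 1 \<longrightarrow> c i = dih_op n (c (i+2)) (c (i+1))) \<and>
        c 1 = y \<and> c (p+1) = y}"

definition pointed_dih_End :: "nat \<Rightarrow> int \<Rightarrow> (int \<Rightarrow> int) set" where
  "pointed_dih_End n y =
     {\<phi> \<in> extensional (dih_carrier n).
        \<phi> ` dih_carrier n \<subseteq> dih_carrier n \<and>
        (\<forall>a\<in>dih_carrier n. \<forall>b\<in>dih_carrier n. \<phi> (dih_op n a b) = dih_op n (\<phi> a) (\<phi> b)) \<and>
        \<phi> y = y}"

text \<open>A directed multigraph: a vertex set together with the number of arcs
  from u to v.\<close>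
type_synonym 'v multigraph = "'v set \<times> ('v \<Rightarrow> 'v \<Rightarrow> nat)"

definition multigraph_iso :: "'v multigraph \<Rightarrow> 'w multigraph \<Rightarrow> bool" where
  "multigraph_iso G H \<longleftrightarrow>
     (\<exists>f. bij_betw f (fst G) (fst H) \<and>
          (\<forall>u\<in>fst G. \<forall>v\<in>fst G. snd G u v = snd H (f u) (f v)))"

text \<open>K_{m,k}: vertices {1..m}, exactly k arcs from u to v for every ordered pair.\<close>
definition K_multigraph :: "nat \<Rightarrow> nat \<Rightarrow> nat multigraph" where
  "K_multigraph m k = ({1..m}, \<lambda>u v. k)"

definition torus_full_quiver :: "nat \<Rightarrow> nat \<Rightarrow> int \<Rightarrow> (nat \<Rightarrow> int) multigraph" where
  "torus_full_quiver p n y =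
     (torus_colorings p n y,
      \<lambda>\<alpha> \<beta>. card {\<phi> \<in> pointed_dih_End n y. restrict (\<phi> \<circ> \<alpha>) {1..p+1} = \<beta>})"

end

theory Submission
  imports Defs
begin

lemma dvd_carrier_eq:
  fixes a b :: int
  assumes "a \<in> dih_carrier n" "b \<in> dih_carrier n" "int n dvd a - b"
  shows "a = b"
proof -
  have "a mod int n = b mod int n" using assms(3) by (simp add: mod_eq_dvd_iff)
  moreover have "a mod int n = a" "b mod int n = b" using assms(1,2) by (auto simp: dih_carrier_def)
  ultimately show ?thesis by simp
qed

lemma coloring_progression:
  assumes c: "c \<in> torus_colorings p n y"
  shows "k \<le> p \<Longrightarrow> int n dvd c (k+1) - y - int k * (c 2 - c 1)"
proof (induction k rule: nat_less_induct)
  case (1 k)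
  have c1: "c 1 = y" using c unfolding torus_colorings_def by blast
  show ?case
  proof (cases k)
    case 0 then show ?thesis using c1 by simp
  next
    case (Suc m)
    show ?thesis
    proof (cases m)
      case 0 then show ?thesis using Suc c1 by (simp add: numeral_2_eq_2)
    next
      case (Suc j)
      have kj: "k = j + 2" using Suc \<open>k = Suc m\<close> by simp
      let ?d = "c 2 - c 1"
      have jk: "j < k" "j \<le> p" "j+1 < k" "j+1 \<le> p" using 1(2) kj by auto
      have ih1: "int n dvd c (j+1) - y - int j * ?d" using 1(1) jk(1,2) by blast
      have ih2': "int n dvd c (j+1+1) - y - int (j+1) * ?d" using 1(1) jk(3,4) by blast
      have e2: "j+1+1 = j+2" by simp
      have ih2: "int n dvd c (j+2) - y - int (j+1) * ?d" using ih2' unfolding e2 .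
      have rel0: "\<forall>i. 1 \<le> i \<and> i \<le> p - 1 \<longrightarrow> c i = dih_op n (c (i+2)) (c (i+1))"
        using c unfolding torus_colorings_def by blast
      have h: "1 \<le> j+1 \<and> j+1 \<le> p - 1" using 1(2) kj by auto
      have rel': "c (j+1) = dih_op n (c (j+1+2)) (c (j+1+1))" using rel0 h by blast
      have e3: "j+1+2 = j+3" by simp
      have rel: "c (j+1) = (2 * c (j+2) - c (j+3)) mod int n"
        using rel' unfolding e2 e3 dih_op_def .
      have "int n dvd (2 * c (j+2) - c (j+3)) - (2 * c (j+2) - c (j+3)) mod int n"
        by (rule dvd_minus_mod)
      hence "int n dvd - ((2 * c (j+2) - c (j+3)) - (2 * c (j+2) - c (j+3)) mod int n)"
        by (simp only: dvd_minus_iff)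
      hence r: "int n dvd c (j+1) - (2 * c (j+2) - c (j+3))"
        unfolding rel by (simp only: minus_diff_eq)
      have eq: "c (k+1) - y - int k * ?d =
          2 * (c (j+2) - y - int (j+1) * ?d) - (c (j+1) - y - int j * ?d)
          + (c (j+1) - (2 * c (j+2) - c (j+3)))"
        using kj by (simp add: algebra_simps numeral_3_eq_3)
      show ?thesis unfolding eq
        by (rule dvd_add[OF dvd_diff[OF dvd_mult[OF ih2] ih1] r])
    qed
  qed
qed

lemma colorings_eq:
  assumes "0 < p" "0 < n" "gcd p n = 1" "y \<in> dih_carrier n"
  shows "torus_colorings p n y = {restrict (\<lambda>_. y) {1..p+1}}"
proof
  show "torus_colorings p n y \<subseteq> {restrict (\<lambda>_. y) {1..p+1}}"
  proof
    fix c assume c: "c \<in> torus_colorings p n y"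
    let ?d = "c 2 - c 1"
    have cp: "c (p+1) = y" using c unfolding torus_colorings_def by blast
    have "int n dvd c (p+1) - y - int p * ?d" by (rule coloring_progression[OF c]) simp
    hence "int n dvd int p * ?d" using cp by (simp add: dvd_minus_iff)
    moreover have "coprime (int n) (int p)" using assms(3)
      by (simp add: coprime_iff_gcd_eq_1 gcd.commute)
    ultimately have dd: "int n dvd ?d" using coprime_dvd_mult_right_iff by blast
    have cy: "c i = y" if i: "i \<in> {1..p+1}" for i
    proof -
      define k where "k = i - 1"
      have k: "i = k+1" "k \<le> p" using i unfolding k_def by auto
      have a: "int n dvd c (k+1) - y - int k * ?d" using coloring_progression[OF c k(2)] .
      have "int n dvd int k * ?d" using dd by (rule dvd_mult)
      hence "int n dvd c (k+1) - y" using a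
        by (metis diff_add_cancel dvd_add)
      moreover have "c (k+1) \<in> dih_carrier n"
      proof -
        have "\<forall>i\<in>{1..p+1}. c i \<in> dih_carrier n" using c unfolding torus_colorings_def by blast
        moreover have "k+1 \<in> {1..p+1}" using k by auto
        ultimately show ?thesis by blast
      qed
      ultimately show ?thesis using dvd_carrier_eq assms(4) k by blast
    qed
    have ce: "c \<in> extensional {1..p+1}" using c unfolding torus_colorings_def by blast
    have "c = restrict (\<lambda>_. y) {1..p+1}"
    proof (rule extensionalityI[OF ce])
      show "restrict (\<lambda>_. y) {1..p+1} \<in> extensional {1..p+1}" by simp
      fix x assume "x \<in> {1..p+1}" thus "c x = restrict (\<lambda>_. y) {1..p+1} x" using cy by simp
    qed
    thus "c \<in> {restrict (\<lambda>_. y) {1..p+1}}" by simp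
  qed
next
  have ym: "y mod int n = y" using assms(4) by (simp add: dih_carrier_def)
  have dy: "dih_op n y y = y" using ym by (simp add: dih_op_def)
  let ?c = "restrict (\<lambda>_. y) {1..p+1}"
  have r1: "\<forall>i. 1 \<le> i \<and> i \<le> p - 1 \<longrightarrow> ?c i = dih_op n (?c (i+2)) (?c (i+1))"
  proof (intro allI impI)
    fix i :: nat assume "1 \<le> i \<and> i \<le> p - 1"
    hence "i \<in> {1..p+1}" "i+1 \<in> {1..p+1}" "i+2 \<in> {1..p+1}" by auto
    thus "?c i = dih_op n (?c (i+2)) (?c (i+1))" using dy by simp
  qed
  have "p \<in> {1..p+1}" "2 \<in> {1..p+1}" "p+1 \<in> {1..p+1}" "1 \<in> {1..p+1}" using assms(1) by auto
  hence r2: "?c p = dih_op n (?c 2) (?c (p+1))" "?c 1 = y" "?c (p+1) = y" using dy by simp_all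
  have r0: "\<forall>i\<in>{1..p+1}. ?c i \<in> dih_carrier n" using assms(4) by simp
  have "?c \<in> torus_colorings p n y"
    unfolding torus_colorings_def mem_Collect_eq
    by (intro conjI restrict_extensional r0 r1 r2)
  thus "{?c} \<subseteq> torus_colorings p n y" by simp
qed

lemma modin: "(y + a*(X mod m - y)) mod m = (y + a*(X - y)) mod (m::int)"
proof -
  have "(y + a*(X mod m - y)) - (y + a*(X - y)) = a * (X mod m - X)" by (simp add: algebra_simps)
  moreover have "m dvd X mod m - X"
    by (metis dvd_minus_iff dvd_minus_mod minus_diff_eq)
  hence "m dvd a * (X mod m - X)" by (rule dvd_mult)
  ultimately show ?thesis by (simp add: mod_eq_dvd_iff)
qed

lemma mod2: "(2*(A mod m) - B mod m) mod m = (2*A - B) mod (m::int)"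
proof -
  have "(2*(A mod m) - B mod m) mod m = (2*(A mod m) - B) mod m" by (rule mod_diff_right_eq)
  also have "\<dots> = ((2*(A mod m)) mod m - B) mod m" by (rule mod_diff_left_eq[symmetric])
  also have "\<dots> = ((2*A) mod m - B) mod m" by (simp only: mod_mult_right_eq)
  also have "\<dots> = (2*A - B) mod m" by (rule mod_diff_left_eq)
  finally show ?thesis .
qed

lemma mod_add_cancel: "(y + a) mod m = (y + b) mod m \<Longrightarrow> a mod m = b mod (m::int)"
  by (metis add_diff_cancel_left' mod_diff_left_eq)

lemma modin2: "(y + a*(X mod m)) mod m = (y + a*X) mod (m::int)"
proof -
  have "(y + a*(X mod m)) mod m = (y + (a*(X mod m)) mod m) mod m" by (rule mod_add_right_eq[symmetric])
  also have "\<dots> = (y + (a*X) mod m) mod m" by (simp only: mod_mult_right_eq)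
  also have "\<dots> = (y + a*X) mod m" by (rule mod_add_right_eq)
  finally show ?thesis .
qed

definition aff :: "nat \<Rightarrow> int \<Rightarrow> int \<Rightarrow> int \<Rightarrow> int" where
  "aff n y a = restrict (\<lambda>x. (y + a * (x - y)) mod int n) (dih_carrier n)"

lemma aff_in:
  assumes "0 < n" "y \<in> dih_carrier n"
  shows "aff n y a \<in> pointed_dih_End n y"
proof -
  have ym: "y mod int n = y" using assms(2) by (simp add: dih_carrier_def)
  have hom: "aff n y a (dih_op n u v) = dih_op n (aff n y a u) (aff n y a v)"
    if "u \<in> dih_carrier n" "v \<in> dih_carrier n" for u v
  proof -
    have "dih_op n u v \<in> dih_carrier n" using assms(1) by (simp add: dih_op_def dih_carrier_def)
    hence "aff n y a (dih_op n u v) = (y + a * ((2*v-u) mod int n - y)) mod int n"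
      by (simp add: aff_def dih_op_def)
    also have "\<dots> = (y + a * (2*v-u - y)) mod int n" by (rule modin)
    also have "\<dots> = (2 * (y + a * (v - y)) - (y + a * (u - y))) mod int n"
      by (simp add: algebra_simps)
    also have "\<dots> = (2 * ((y + a * (v - y)) mod int n) - ((y + a * (u - y)) mod int n)) mod int n"
      by (rule mod2[symmetric])
    finally show ?thesis using that by (simp add: aff_def dih_op_def)
  qed
  have c1: "aff n y a \<in> extensional (dih_carrier n)" by (simp add: aff_def)
  have c2: "aff n y a ` dih_carrier n \<subseteq> dih_carrier n"
    using assms(1) by (auto simp: aff_def dih_carrier_def)
  have c3: "aff n y a y = y" using assms(2) ym by (simp add: aff_def)
  show ?thesis unfolding pointed_dih_End_def mem_Collect_eq
    using c1 c2 c3 hom by blast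
qed

lemma End_char:
  assumes "0 < n" "y \<in> dih_carrier n" "\<phi> \<in> pointed_dih_End n y"
  shows "\<phi> = aff n y ((\<phi> ((y+1) mod int n) - y) mod int n)"
proof -
  let ?a = "(\<phi> ((y+1) mod int n) - y) mod int n"
  have ym: "y mod int n = y" using assms(2) by (simp add: dih_carrier_def)
  have E: "\<phi> \<in> extensional (dih_carrier n)" "\<phi> ` dih_carrier n \<subseteq> dih_carrier n"
    "\<And>u v. u\<in>dih_carrier n \<Longrightarrow> v\<in>dih_carrier n \<Longrightarrow> \<phi> (dih_op n u v) = dih_op n (\<phi> u) (\<phi> v)"
    "\<phi> y = y" using assms(3) unfolding pointed_dih_End_def mem_Collect_eq by blast+
  have inC: "x mod int n \<in> dih_carrier n" for x using assms(1) by (simp add: dih_carrier_def)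
  have phimod: "\<phi> (x mod int n) mod int n = \<phi> (x mod int n)" for x
  proof -
    have "\<phi> (x mod int n) \<in> dih_carrier n" using E(2) inC[of x] by blast
    thus ?thesis by (simp add: dih_carrier_def)
  qed
  have key: "\<phi> ((y + int k) mod int n) = (y + ?a * int k) mod int n" for k
  proof (induction k rule: nat_less_induct)
    case (1 k)
    show ?case
    proof (cases k)
      case 0 then show ?thesis using ym E(4) by simp
    next
      case (Suc m)
      show ?thesis
      proof (cases m)
        case 0
        have "(y + ?a) mod int n = (y + (\<phi> ((y+1) mod int n) - y)) mod int n" by (simp add: mod_simps)
        also have "\<dots> = \<phi> ((y+1) mod int n)" using phimod[of "y+1"] by simp
        finally show ?thesis using Suc 0 by simp
      next
        case (Suc j)
        have kj: "k = j + 2" using Suc \<open>k = Suc m\<close> by simp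
        have "j < k" "j+1 < k" using kj by auto
        hence ih1: "\<phi> ((y + int j) mod int n) = (y + ?a * int j) mod int n"
          and ih2: "\<phi> ((y + int (j+1)) mod int n) = (y + ?a * int (j+1)) mod int n"
          using 1 by blast+
        have "dih_op n ((y + int j) mod int n) ((y + int (j+1)) mod int n) = (y + int k) mod int n"
          unfolding dih_op_def using kj by (simp only: mod2) (simp add: algebra_simps)
        hence "\<phi> ((y + int k) mod int n) =
            dih_op n (\<phi> ((y + int j) mod int n)) (\<phi> ((y + int (j+1)) mod int n))"
          using E(3)[OF inC inC] by metis
        also have "\<dots> = (2 * ((y + ?a * int (j+1)) mod int n) - ((y + ?a * int j) mod int n)) mod int n"
          using ih1 ih2 by (simp add: dih_op_def)
        also have "\<dots> = (2 * (y + ?a * int (j+1)) - (y + ?a * int j)) mod int n"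
          by (rule mod2)
        also have "\<dots> = (y + ?a * int k) mod int n" using kj by (simp add: algebra_simps)
        finally show ?thesis .
      qed
    qed
  qed
  show ?thesis
  proof (rule extensionalityI[OF E(1)])
    show "aff n y ?a \<in> extensional (dih_carrier n)" by (simp add: aff_def)
    fix x assume x: "x \<in> dih_carrier n"
    define k where "k = nat ((x - y) mod int n)"
    have k0: "int k = (x - y) mod int n" unfolding k_def using assms(1) by simp
    have "(y + int k) mod int n = x mod int n" unfolding k0 by (simp add: mod_simps)
    also have "\<dots> = x" using x by (simp add: dih_carrier_def)
    finally have xk: "(y + int k) mod int n = x" .
    have "\<phi> x = (y + ?a * int k) mod int n" using key[of k] xk by simp
    also have "\<dots> = (y + ?a * (x - y)) mod int n" unfolding k0 by (rule modin2)
    finally show "\<phi> x = aff n y ?a x" using x by (simp add: aff_def)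
  qed
qed

lemma End_card:
  assumes "0 < n" "y \<in> dih_carrier n"
  shows "card (pointed_dih_End n y) = n"
proof -
  have "bij_betw (aff n y) {0..<int n} (pointed_dih_End n y)"
  proof (rule bij_betwI')
    fix a b assume ab: "a \<in> {0..<int n}" "b \<in> {0..<int n}"
    show "(aff n y a = aff n y b) = (a = b)"
    proof
      assume h: "aff n y a = aff n y b"
      have inC: "(y+1) mod int n \<in> dih_carrier n" using assms(1) by (simp add: dih_carrier_def)
      have "aff n y a ((y+1) mod int n) = (y + a) mod int n" for a
        using inC by (simp add: aff_def modin)
      hence "(y + a) mod int n = (y + b) mod int n" using h by metis
      hence "a mod int n = b mod int n" by (rule mod_add_cancel)
      thus "a = b" using ab by simp
    qed simp
  next
    fix a assume "a \<in> {0..<int n}" thus "aff n y a \<in> pointed_dih_End n y" using aff_in assms by blast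
  next
    fix \<phi> assume "\<phi> \<in> pointed_dih_End n y"
    hence e: "\<phi> = aff n y ((\<phi> ((y+1) mod int n) - y) mod int n)" by (rule End_char[OF assms])
    have "(\<phi> ((y+1) mod int n) - y) mod int n \<in> {0..<int n}" using assms(1) by simp
    thus "\<exists>a\<in>{0..<int n}. \<phi> = aff n y a" using e by blast
  qed
  hence "card {0..<int n} = card (pointed_dih_End n y)" by (rule bij_betw_same_card)
  thus ?thesis by simp
qed

theorem theorem6p13:
  fixes p n :: nat and y :: int
  assumes "0 < p" and "0 < n" and "gcd p n = 1" and "y \<in> dih_carrier n"
  shows "multigraph_iso (torus_full_quiver p n y) (K_multigraph 1 n)"
proof -
  let ?c = "restrict (\<lambda>_. y) {1..p+1}"
  have "restrict (\<phi> \<circ> ?c) {1..p+1} = ?c" if "\<phi> \<in> pointed_dih_End n y" for \<phi>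
  proof -
    have "\<phi> y = y" using that unfolding pointed_dih_End_def by blast
    thus ?thesis by (intro ext) (simp add: restrict_def)
  qed
  hence S: "{\<phi> \<in> pointed_dih_End n y. restrict (\<phi> \<circ> ?c) {1..p+1} = ?c} = pointed_dih_End n y" by auto
  show ?thesis
    unfolding multigraph_iso_def torus_full_quiver_def K_multigraph_def
    using colorings_eq[OF assms] S End_card[OF assms(2,4)]
    by (intro exI[of _ "\<lambda>_. 1::nat"]) (auto simp: bij_betw_def)
qed

end
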